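(* If $S\subseteq\mathbb{N}^d$ is a quasi-irreducible GNS, then $\tau(S)\le t(S)\le 2\tau(S)$.
   Context: $\mathbb{N}=\{0,1,2,\dots\}$. A GNS is a submonoid $S\subseteq\mathbb{N}^d$ with finite complement $\mathcal{H}(S)=\mathbb{N}^d\setminus S$ (gaps). A relaxed monomial order is a total order $\prec$ on $\mathbb{N}^d$ with (i) $v\prec w\Rightarrow v\prec w+u$ for all $u\in\mathbb{N}^d$, (ii) $0\prec v$ for all $v\neq0$. A gap is Frobenius allowable if it equals $\max_\prec\mathcal{H}(S)$ for some relaxed monomial order; $FA(S)$ is their set and $\tau(S)=|FA(S)|$. A gap $P$ is pseudo-Frobenius if $P+s\in S$ for all nonzero $s\in S$; $PF(S)$ is their set and $t(S)=|PF(S)|$. $S$ is quasi-irreducible if for every $x\in\mathcal{H}(S)$, either $2x\in FA(S)$ or there is $F\in FA(S)$ with $F-x\in S$. *)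

theory Defs
  imports Main
begin

text \<open>Elements of N^d are represented as functions nat => nat vanishing outside {0..<d}.\<close>

definition nvec :: "nat \<Rightarrow> (nat \<Rightarrow> nat) set" where
  "nvec d = {v. \<forall>i\<ge>d. v i = 0}"

definition vadd :: "(nat \<Rightarrow> nat) \<Rightarrow> (nat \<Rightarrow> nat) \<Rightarrow> (nat \<Rightarrow> nat)" where
  "vadd u v = (\<lambda>i. u i + v i)"

definition vzero :: "nat \<Rightarrow> nat" where
  "vzero = (\<lambda>i. 0)"

definition is_GNS :: "nat \<Rightarrow> (nat \<Rightarrow> nat) set \<Rightarrow> bool" where
  "is_GNS d S \<longleftrightarrow> S \<subseteq> nvec d \<and> vzero \<in> S \<and>
     (\<forall>u\<in>S. \<forall>v\<in>S. vadd u v \<in> S) \<and> finite (nvec d - S)"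

definition gaps :: "nat \<Rightarrow> (nat \<Rightarrow> nat) set \<Rightarrow> (nat \<Rightarrow> nat) set" where
  "gaps d S = nvec d - S"

definition relaxed_monomial_order ::
  "nat \<Rightarrow> ((nat \<Rightarrow> nat) \<Rightarrow> (nat \<Rightarrow> nat) \<Rightarrow> bool) \<Rightarrow> bool" where
  "relaxed_monomial_order d lt \<longleftrightarrow>
     (\<forall>v\<in>nvec d. \<not> lt v v) \<and>
     (\<forall>u\<in>nvec d. \<forall>v\<in>nvec d. \<forall>w\<in>nvec d. lt u v \<longrightarrow> lt v w \<longrightarrow> lt u w) \<and>
     (\<forall>v\<in>nvec d. \<forall>w\<in>nvec d. v \<noteq> w \<longrightarrow> lt v w \<or> lt w v) \<and>
     (\<forall>u\<in>nvec d. \<forall>v\<in>nvec d. \<forall>w\<in>nvec d. lt v w \<longrightarrow> lt v (vadd w u)) \<and>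
     (\<forall>v\<in>nvec d. v \<noteq> vzero \<longrightarrow> lt vzero v)"

definition is_max_wrt ::
  "((nat \<Rightarrow> nat) \<Rightarrow> (nat \<Rightarrow> nat) \<Rightarrow> bool) \<Rightarrow> (nat \<Rightarrow> nat) set \<Rightarrow> (nat \<Rightarrow> nat) \<Rightarrow> bool" where
  "is_max_wrt lt H F \<longleftrightarrow> F \<in> H \<and> (\<forall>h\<in>H. h \<noteq> F \<longrightarrow> lt h F)"

definition FA :: "nat \<Rightarrow> (nat \<Rightarrow> nat) set \<Rightarrow> (nat \<Rightarrow> nat) set" where
  "FA d S = {F \<in> gaps d S. \<exists>lt. relaxed_monomial_order d lt \<and> is_max_wrt lt (gaps d S) F}"

definition tau :: "nat \<Rightarrow> (nat \<Rightarrow> nat) set \<Rightarrow> nat" where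
  "tau d S = card (FA d S)"

definition PF :: "nat \<Rightarrow> (nat \<Rightarrow> nat) set \<Rightarrow> (nat \<Rightarrow> nat) set" where
  "PF d S = {P \<in> gaps d S. \<forall>s\<in>S. s \<noteq> vzero \<longrightarrow> vadd P s \<in> S}"

definition type_t :: "nat \<Rightarrow> (nat \<Rightarrow> nat) set \<Rightarrow> nat" where
  "type_t d S = card (PF d S)"

text \<open>F - x \<in> S (in N^d) is expressed as: F = x + s for some s \<in> S.\<close>
definition quasi_irreducible :: "nat \<Rightarrow> (nat \<Rightarrow> nat) set \<Rightarrow> bool" where
  "quasi_irreducible d S \<longleftrightarrow>
     (\<forall>x\<in>gaps d S. vadd x x \<in> FA d S \<or> (\<exists>F\<in>FA d S. \<exists>s\<in>S. vadd x s = F))"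

end

theory Submission
  imports Defs
begin

lemma gaps_finite: "is_GNS d S \<Longrightarrow> finite (gaps d S)"
  by (simp add: is_GNS_def gaps_def)

lemma vadd_nvec: "u \<in> nvec d \<Longrightarrow> v \<in> nvec d \<Longrightarrow> vadd u v \<in> nvec d"
  by (simp add: nvec_def vadd_def)

lemma vadd_neq: "s \<noteq> vzero \<Longrightarrow> vadd F s \<noteq> F"
proof
  assume "s \<noteq> vzero" "vadd F s = F"
  then obtain i where "s i \<noteq> 0" by (auto simp: vzero_def)
  moreover have "F i + s i = F i" using \<open>vadd F s = F\<close> unfolding vadd_def by (rule fun_cong)
  ultimately show False by simp
qed

lemma FA_sub_PF:
  assumes "is_GNS d S" shows "FA d S \<subseteq> PF d S"
proof
  fix F assume F: "F \<in> FA d S"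
  then obtain lt where o: "relaxed_monomial_order d lt" and m: "is_max_wrt lt (gaps d S) F"
    and Fg: "F \<in> gaps d S"
    by (auto simp: FA_def)
  have Fn: "F \<in> nvec d" using Fg by (simp add: gaps_def)
  have "vadd F s \<in> S" if s: "s \<in> S" "s \<noteq> vzero" for s
  proof (rule ccontr)
    assume ns: "vadd F s \<notin> S"
    have sn: "s \<in> nvec d" using s assms by (auto simp: is_GNS_def)
    have wn: "vadd F s \<in> nvec d" using Fn sn vadd_nvec by blast
    hence "vadd F s \<in> gaps d S" using ns by (simp add: gaps_def)
    moreover have "vadd F s \<noteq> F" using vadd_neq s by blast
    ultimately have "lt (vadd F s) F" using m by (simp add: is_max_wrt_def)
    have ax4: "\<forall>u\<in>nvec d. \<forall>v\<in>nvec d. \<forall>w\<in>nvec d. lt v w \<longrightarrow> lt v (vadd w u)"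
      and ax1: "\<forall>v\<in>nvec d. \<not> lt v v"
      using o unfolding relaxed_monomial_order_def by blast+
    have "lt (vadd F s) (vadd F s)" using ax4 wn Fn sn \<open>lt (vadd F s) F\<close> by blast
    thus False using ax1 wn by blast
  qed
  thus "F \<in> PF d S" using Fg by (simp add: PF_def)
qed

lemma vadd_zero: "vadd P vzero = P"
  by (simp add: vadd_def vzero_def)

lemma PF_sub:
  assumes "quasi_irreducible d S"
  shows "PF d S \<subseteq> FA d S \<union> {P \<in> PF d S. vadd P P \<in> FA d S}"
proof
  fix P assume P: "P \<in> PF d S"
  hence Pg: "P \<in> gaps d S" by (simp add: PF_def)
  show "P \<in> FA d S \<union> {P \<in> PF d S. vadd P P \<in> FA d S}"
  proof (cases "vadd P P \<in> FA d S")
    case True thus ?thesis using P by simp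
  next
    case False
    then obtain F s where F: "F \<in> FA d S" "s \<in> S" "vadd P s = F"
      using assms Pg by (auto simp: quasi_irreducible_def)
    have "s = vzero"
    proof (rule ccontr)
      assume "s \<noteq> vzero"
      hence "F \<in> S" using P F by (auto simp: PF_def)
      moreover have "F \<notin> S" using F(1) by (simp add: FA_def gaps_def)
      ultimately show False by simp
    qed
    hence "P = F" using F vadd_zero by simp
    thus ?thesis using F by simp
  qed
qed

lemma vadd_double_inj: "inj_on (\<lambda>P. vadd P P) A"
proof (rule inj_onI)
  fix P Q assume "vadd P P = vadd Q Q"
  hence "\<And>i. P i + P i = Q i + Q i" unfolding vadd_def by (rule fun_cong)
  thus "P = Q" by (intro ext) (simp add: mult_2[symmetric])
qed

theorem corollary3p4:
  fixes d :: nat and S :: "(nat \<Rightarrow> nat) set"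
  assumes "is_GNS d S" and "quasi_irreducible d S"
  shows "tau d S \<le> type_t d S \<and> type_t d S \<le> 2 * tau d S"
proof
  have fg: "finite (gaps d S)" using assms(1) gaps_finite by blast
  have fPF: "finite (PF d S)" using fg by (rule rev_finite_subset) (auto simp: PF_def)
  have fFA: "finite (FA d S)" using fg by (rule rev_finite_subset) (auto simp: FA_def)
  show "tau d S \<le> type_t d S"
    unfolding tau_def type_t_def using FA_sub_PF[OF assms(1)] fPF by (rule card_mono[rotated])
  let ?B = "{P \<in> PF d S. vadd P P \<in> FA d S}"
  have fB: "finite ?B" using fPF by simp
  have "card ?B \<le> card (FA d S)"
    using card_inj_on_le[OF vadd_double_inj[of ?B] _ fFA] by auto
  moreover have "card (PF d S) \<le> card (FA d S \<union> ?B)"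
    using PF_sub[OF assms(2)] fFA fB by (intro card_mono) auto
  moreover have "card (FA d S \<union> ?B) \<le> card (FA d S) + card ?B" by (rule card_Un_le)
  ultimately show "type_t d S \<le> 2 * tau d S" unfolding tau_def type_t_def by linarith
qed

end
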